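(* Let $(P,A,\lambda)$ be a marked poset. Then all marked chain-order polytopes $\mathcal{CO}_{U_1,U_2}(\lambda)$, for $(U_1,U_2)$ ranging over the admissible decompositions of $(P,A,\lambda)$, are Ehrhart equivalent, i.e. they have the same Ehrhart polynomial; equivalently, for every admissible decomposition $(U_1,U_2)$ and every $n\in\mathbb{N}$, $|S_{U_1,U_2}(n\lambda)|=|S_{P\setminus A,\emptyset}(n\lambda)|$.
   Context: A marked poset is a triple $(P,A,\lambda)$ where $(P,\prec)$ is a finite poset, $A\subseteq P$ contains all minimal and all maximal elements of $P$, and $\lambda:A\to\mathbb{Z}_{\ge 0}$, $a\mapsto\lambda_a$. A decomposition of $(P,A,\lambda)$ is a pair $(U_1,U_2)$ of disjoint sets with $U_1\cup U_2=P\setminus A$; it is admissible if there are no $u_1\in U_1$, $u_2\in U_2$ with $u_1\prec u_2$. Put $A_1=A\cup U_1$. The marked chain-order polytope $\mathcal{CO}_{U_1,U_2}(\lambda)\subset\mathbb{R}^{P\setminus A}$ is the set of $(x_p)_{p\in P\setminus A}$ such that: (i) $x_p\le\lambda_a$ whenever $p\in U_1$, $a\in A$, $p\prec a$; (ii) $\lambda_b\le x_q$ whenever $q\in U_1$, $b\in A$, $b\prec q$; (iii) $x_p\le x_q$ whenever $p,q\in U_1$, $p\prec q$; (iv) $x_p\ge0$ for $p\in U_2$; (v) for every chain $b\prec p_n\prec\cdots\prec p_1\prec a$ with $n\ge1$, $a,b\in A_1$, $p_i\in U_2$: $x_{p_1}+\cdots+x_{p_n}\le\lambda_a-\lambda_b$,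 where $\lambda_q$ means $x_q$ for $q\in U_1$; (vi) for every chain $p_1\prec\cdots\prec p_s\prec q$ with $q\in U_1$, $p_i\in U_2$: $x_{p_1}+\cdots+x_{p_s}\le x_q$. Set $S_{U_1,U_2}(\lambda)=\mathcal{CO}_{U_1,U_2}(\lambda)\cap\mathbb{Z}_{\ge0}^{P\setminus A}$. These polytopes are lattice polytopes. $\mathcal{CO}_{P\setminus A,\emptyset}(\lambda)$ is the marked order polytope. *)

theory Defs
  imports Complex_Main
begin

text \<open>A marked poset (P, A, lambda): A contains all minimal and maximal elements of P;
  lambda : A -> nonnegative integers is modelled as a function to nat
  (only its values on A matter).\<close>

definition strict_poset :: "'a set \<Rightarrow> ('a \<Rightarrow> 'a \<Rightarrow> bool) \<Rightarrow> bool" where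
  "strict_poset P rel \<longleftrightarrow>
     (\<forall>p\<in>P. \<not> rel p p) \<and>
     (\<forall>p\<in>P. \<forall>q\<in>P. \<forall>r\<in>P. rel p q \<longrightarrow> rel q r \<longrightarrow> rel p r)"

definition minimal_elem :: "'a set \<Rightarrow> ('a \<Rightarrow> 'a \<Rightarrow> bool) \<Rightarrow> 'a \<Rightarrow> bool" where
  "minimal_elem P rel p \<longleftrightarrow> p \<in> P \<and> (\<forall>q\<in>P. \<not> rel q p)"

definition maximal_elem :: "'a set \<Rightarrow> ('a \<Rightarrow> 'a \<Rightarrow> bool) \<Rightarrow> 'a \<Rightarrow> bool" where
  "maximal_elem P rel p \<longleftrightarrow> p \<in> P \<and> (\<forall>q\<in>P. \<not> rel p q)"

definition marked_poset :: "'a set \<Rightarrow> ('a \<Rightarrow> 'a \<Rightarrow> bool) \<Rightarrow> 'a set \<Rightarrow> bool" where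
  "marked_poset P rel A \<longleftrightarrow> finite P \<and> strict_poset P rel \<and> A \<subseteq> P \<and>
     (\<forall>p. minimal_elem P rel p \<longrightarrow> p \<in> A) \<and>
     (\<forall>p. maximal_elem P rel p \<longrightarrow> p \<in> A)"

definition admissible_decomp ::
  "'a set \<Rightarrow> ('a \<Rightarrow> 'a \<Rightarrow> bool) \<Rightarrow> 'a set \<Rightarrow> 'a set \<Rightarrow> 'a set \<Rightarrow> bool" where
  "admissible_decomp P rel A U1 U2 \<longleftrightarrow>
     U1 \<inter> U2 = {} \<and> U1 \<union> U2 = P - A \<and>
     \<not> (\<exists>u1\<in>U1. \<exists>u2\<in>U2. rel u1 u2)"

text \<open>A chain p_1 < ... < p_k is a list sorted strictly w.r.t. rel (listed increasingly).\<close>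

text \<open>Points of R^(P - A) are real-valued functions on 'a that vanish outside P - A.
  The value lambda_q of condition (v): x_q if q in U1, lambda_q otherwise.\<close>

definition mval :: "'a set \<Rightarrow> ('a \<Rightarrow> nat) \<Rightarrow> ('a \<Rightarrow> real) \<Rightarrow> 'a \<Rightarrow> real" where
  "mval U1 lam x q = (if q \<in> U1 then x q else real (lam q))"

definition chain_order_polytope ::
  "'a set \<Rightarrow> ('a \<Rightarrow> 'a \<Rightarrow> bool) \<Rightarrow> 'a set \<Rightarrow> ('a \<Rightarrow> nat) \<Rightarrow> 'a set \<Rightarrow> 'a set
     \<Rightarrow> ('a \<Rightarrow> real) set" where
  "chain_order_polytope P rel A lam U1 U2 = {x.
     (\<forall>p. p \<notin> P - A \<longrightarrow> x p = 0) \<and>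
     \<comment> \<open>(i)\<close>
     (\<forall>p\<in>U1. \<forall>a\<in>A. rel p a \<longrightarrow> x p \<le> real (lam a)) \<and>
     \<comment> \<open>(ii)\<close>
     (\<forall>q\<in>U1. \<forall>b\<in>A. rel b q \<longrightarrow> real (lam b) \<le> x q) \<and>
     \<comment> \<open>(iii)\<close>
     (\<forall>p\<in>U1. \<forall>q\<in>U1. rel p q \<longrightarrow> x p \<le> x q) \<and>
     \<comment> \<open>(iv)\<close>
     (\<forall>p\<in>U2. 0 \<le> x p) \<and>
     \<comment> \<open>(v): chains b < p_n < ... < p_1 < a, n >= 1, a b in A1 = A union U1, p_i in U2\<close>
     (\<forall>ps a b. ps \<noteq> [] \<and> set ps \<subseteq> U2 \<and> sorted_wrt rel ps \<and>
        a \<in> A \<union> U1 \<and> b \<in> A \<union> U1 \<and> rel b (hd ps) \<and> rel (last ps) a \<longrightarrow>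
        sum_list (map x ps) \<le> mval U1 lam x a - mval U1 lam x b) \<and>
     \<comment> \<open>(vi): chains p_1 < ... < p_s < q, q in U1, p_i in U2\<close>
     (\<forall>ps q. ps \<noteq> [] \<and> set ps \<subseteq> U2 \<and> sorted_wrt rel ps \<and>
        q \<in> U1 \<and> rel (last ps) q \<longrightarrow>
        sum_list (map x ps) \<le> x q)}"

definition lattice_points_CO ::
  "'a set \<Rightarrow> ('a \<Rightarrow> 'a \<Rightarrow> bool) \<Rightarrow> 'a set \<Rightarrow> ('a \<Rightarrow> nat) \<Rightarrow> 'a set \<Rightarrow> 'a set
     \<Rightarrow> ('a \<Rightarrow> real) set" where
  "lattice_points_CO P rel A lam U1 U2 =
     {x \<in> chain_order_polytope P rel A lam U1 U2.
        \<forall>p\<in>P - A. x p \<in> \<int> \<and> 0 \<le> x p}"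

end

theory Submission
  imports Defs
begin

locale mcp =
  fixes P A U1 U2 :: "'a set" and rel :: "'a \<Rightarrow> 'a \<Rightarrow> bool" and lam :: "'a \<Rightarrow> nat"
  assumes mp: "marked_poset P rel A" and ad: "admissible_decomp P rel A U1 U2"
begin

lemma finP: "finite P" using mp unfolding marked_poset_def by blast
lemma irr: "p \<in> P \<Longrightarrow> \<not> rel p p" using mp unfolding marked_poset_def strict_poset_def by blast
lemma tr: "p \<in> P \<Longrightarrow> q \<in> P \<Longrightarrow> r \<in> P \<Longrightarrow> rel p q \<Longrightarrow> rel q r \<Longrightarrow> rel p r"
  using mp unfolding marked_poset_def strict_poset_def by blast
lemma AP: "A \<subseteq> P" using mp unfolding marked_poset_def by blast
lemma disj: "U1 \<inter> U2 = {}" using ad unfolding admissible_decomp_def by blast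
lemma cover: "U1 \<union> U2 = P - A" using ad unfolding admissible_decomp_def by blast
lemma noadm: "u \<in> U1 \<Longrightarrow> v \<in> U2 \<Longrightarrow> \<not> rel u v" using ad unfolding admissible_decomp_def by blast
lemma pred_ne: "p \<in> P - A \<Longrightarrow> \<exists>q\<in>P. rel q p"
  using mp unfolding marked_poset_def minimal_elem_def by blast

definition "pred p = {q\<in>P. rel q p}"
lemma fin_pred: "finite (pred p)" unfolding pred_def using finP by simp
lemma pred_ne2: "p \<in> P - A \<Longrightarrow> pred p \<noteq> {}" using pred_ne unfolding pred_def by blast

definition "R = {(q,p). q\<in>P \<and> p\<in>P \<and> rel q p}"

lemma wfR: "wf R"
proof -
  have "finite R" by (rule finite_subset[of R "P \<times> P"]) (auto simp: R_def finP)
  moreover have "trans R" unfolding trans_def R_def using tr by blast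
  then have "acyclic R" unfolding acyclic_def using irr by (auto simp: R_def)
  ultimately show ?thesis by (rule finite_acyclic_wf)
qed

definition "ext y q = (if q \<in> A then real (lam q) else y q)"
definition "F y p = (if p \<in> U2 then y p - Max (ext y ` pred p) else y p)"
abbreviation "OP \<equiv> lattice_points_CO P rel A lam (P - A) {}"
abbreviation "CP \<equiv> lattice_points_CO P rel A lam U1 U2"

lemma OP_iff: "y \<in> OP \<longleftrightarrow> (\<forall>p. p \<notin> P - A \<longrightarrow> y p = 0) \<and>
   (\<forall>p\<in>P-A. \<forall>a\<in>A. rel p a \<longrightarrow> y p \<le> real (lam a)) \<and>
   (\<forall>q\<in>P-A. \<forall>b\<in>A. rel b q \<longrightarrow> real (lam b) \<le> y q) \<and>
   (\<forall>p\<in>P-A. \<forall>q\<in>P-A. rel p q \<longrightarrow> y p \<le> y q) \<and>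
   (\<forall>p\<in>P-A. y p \<in> \<int> \<and> 0 \<le> y p)"
  unfolding lattice_points_CO_def chain_order_polytope_def by auto

lemma CP_iff: "x \<in> CP \<longleftrightarrow> (\<forall>p. p \<notin> P - A \<longrightarrow> x p = 0) \<and>
     (\<forall>p\<in>U1. \<forall>a\<in>A. rel p a \<longrightarrow> x p \<le> real (lam a)) \<and>
     (\<forall>q\<in>U1. \<forall>b\<in>A. rel b q \<longrightarrow> real (lam b) \<le> x q) \<and>
     (\<forall>p\<in>U1. \<forall>q\<in>U1. rel p q \<longrightarrow> x p \<le> x q) \<and>
     (\<forall>p\<in>U2. 0 \<le> x p) \<and>
     (\<forall>ps a b. ps \<noteq> [] \<and> set ps \<subseteq> U2 \<and> sorted_wrt rel ps \<and>
        a \<in> A \<union> U1 \<and> b \<in> A \<union> U1 \<and> rel b (hd ps) \<and> rel (last ps) a \<longrightarrow>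
        sum_list (map x ps) \<le> mval U1 lam x a - mval U1 lam x b) \<and>
     (\<forall>ps q. ps \<noteq> [] \<and> set ps \<subseteq> U2 \<and> sorted_wrt rel ps \<and>
        q \<in> U1 \<and> rel (last ps) q \<longrightarrow>
        sum_list (map x ps) \<le> x q) \<and>
     (\<forall>p\<in>P-A. x p \<in> \<int> \<and> 0 \<le> x p)"
  unfolding lattice_points_CO_def chain_order_polytope_def by auto

lemma ext_le: assumes "y \<in> OP" "p \<in> P - A" "q \<in> pred p" shows "ext y q \<le> y p"
  using assms unfolding OP_iff pred_def ext_def by auto

lemma ext_nonneg: assumes "y \<in> OP" "q \<in> P" shows "0 \<le> ext y q \<and> ext y q \<in> \<int>"
  using assms unfolding OP_iff ext_def by auto

lemma Max_le: assumes "y \<in> OP" "p \<in> P - A" shows "Max (ext y ` pred p) \<le> y p"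
  using assms fin_pred pred_ne2 ext_le by (auto intro!: Max.boundedI)

lemma tele: assumes "y \<in> OP"
  shows "ps \<noteq> [] \<Longrightarrow> set ps \<subseteq> U2 \<Longrightarrow> sorted_wrt rel ps \<Longrightarrow> b \<in> P \<Longrightarrow> rel b (hd ps)
     \<Longrightarrow> sum_list (map (F y) ps) \<le> y (last ps) - ext y b"
proof (induction ps arbitrary: b)
  case Nil then show ?case by simp
next
  case (Cons q rest)
  have qU: "q \<in> U2" using Cons by simp
  then have qQ: "q \<in> P - A" using cover by blast
  have "b \<in> pred q" using Cons unfolding pred_def by simp
  then have "ext y b \<le> Max (ext y ` pred q)" using fin_pred by (intro Max_ge) auto
  then have Fq: "F y q \<le> y q - ext y b" using qU unfolding F_def by simp
  show ?case
  proof (cases "rest = []")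
    case True then show ?thesis using Fq by simp
  next
    case False
    have "rel q (hd rest)" using Cons False by (cases rest) auto
    then have "sum_list (map (F y) rest) \<le> y (last rest) - ext y q"
      using Cons False qQ by auto
    moreover have "ext y q = y q" using qQ unfolding ext_def by simp
    ultimately show ?thesis using Fq False by simp
  qed
qed


lemma F_U1: "p \<notin> U2 \<Longrightarrow> F y p = y p" unfolding F_def by simp

lemma F_in: assumes y: "y \<in> OP" shows "F y \<in> CP"
proof -
  have Y: "(\<forall>p. p \<notin> P - A \<longrightarrow> y p = 0)"
   "(\<forall>p\<in>P-A. \<forall>a\<in>A. rel p a \<longrightarrow> y p \<le> real (lam a))"
   "(\<forall>q\<in>P-A. \<forall>b\<in>A. rel b q \<longrightarrow> real (lam b) \<le> y q)"
   "(\<forall>p\<in>P-A. \<forall>q\<in>P-A. rel p q \<longrightarrow> y p \<le> y q)"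
   "(\<forall>p\<in>P-A. y p \<in> \<int> \<and> 0 \<le> y p)" using y unfolding OP_iff by blast+
  have U1Q: "U1 \<subseteq> P - A" and U2Q: "U2 \<subseteq> P - A" using cover by auto
  have FU1: "\<And>p. p \<in> U1 \<Longrightarrow> F y p = y p" using disj F_U1 by blast
  have c1: "\<forall>p. p \<notin> P - A \<longrightarrow> F y p = 0"
  proof (intro allI impI)
    fix p assume "p \<notin> P - A"
    then have "p \<notin> U2" using U2Q by blast
    then have "F y p = y p" by (rule F_U1)
    then show "F y p = 0" using Y(1) \<open>p \<notin> P - A\<close> by simp
  qed
  have c2: "\<forall>p\<in>U1. \<forall>a\<in>A. rel p a \<longrightarrow> F y p \<le> real (lam a)" using Y(2) U1Q FU1 by auto
  have c3: "\<forall>q\<in>U1. \<forall>b\<in>A. rel b q \<longrightarrow> real (lam b) \<le> F y q" using Y(3) U1Q FU1 by auto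
  have c4: "\<forall>p\<in>U1. \<forall>q\<in>U1. rel p q \<longrightarrow> F y p \<le> F y q" using Y(4) U1Q FU1 by auto
  have c5: "\<forall>p\<in>U2. 0 \<le> F y p" using Max_le[OF y] U2Q unfolding F_def by fastforce
  have mv: "\<And>a. a \<in> A \<union> U1 \<Longrightarrow> mval U1 lam (F y) a = ext y a"
    using FU1 U1Q unfolding mval_def ext_def by auto
  have c6: "\<forall>ps a b. ps \<noteq> [] \<and> set ps \<subseteq> U2 \<and> sorted_wrt rel ps \<and>
        a \<in> A \<union> U1 \<and> b \<in> A \<union> U1 \<and> rel b (hd ps) \<and> rel (last ps) a \<longrightarrow>
        sum_list (map (F y) ps) \<le> mval U1 lam (F y) a - mval U1 lam (F y) b"
  proof (intro allI impI)
    fix ps a b assume H: "ps \<noteq> [] \<and> set ps \<subseteq> U2 \<and> sorted_wrt rel ps \<and>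
        a \<in> A \<union> U1 \<and> b \<in> A \<union> U1 \<and> rel b (hd ps) \<and> rel (last ps) a"
    have bP: "b \<in> P" using H AP U1Q by blast
    have "sum_list (map (F y) ps) \<le> y (last ps) - ext y b" using tele[OF y] H bP by blast
    moreover have lQ: "last ps \<in> P - A" using H U2Q last_in_set by blast
    have "y (last ps) \<le> ext y a"
    proof (cases "a \<in> A")
      case True then show ?thesis using Y(2) lQ H unfolding ext_def by auto
    next
      case False then show ?thesis using Y(4) lQ H U1Q unfolding ext_def by auto
    qed
    ultimately show "sum_list (map (F y) ps) \<le> mval U1 lam (F y) a - mval U1 lam (F y) b"
      using mv H by simp
  qed
  have c7: "\<forall>ps q. ps \<noteq> [] \<and> set ps \<subseteq> U2 \<and> sorted_wrt rel ps \<and>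
        q \<in> U1 \<and> rel (last ps) q \<longrightarrow> sum_list (map (F y) ps) \<le> F y q"
  proof (intro allI impI)
    fix ps q assume H: "ps \<noteq> [] \<and> set ps \<subseteq> U2 \<and> sorted_wrt rel ps \<and> q \<in> U1 \<and> rel (last ps) q"
    have hQ: "hd ps \<in> P - A" using H U2Q hd_in_set by blast
    obtain b where b: "b \<in> P" "rel b (hd ps)" using pred_ne[OF hQ] by blast
    have "sum_list (map (F y) ps) \<le> y (last ps) - ext y b" using tele[OF y] H b by blast
    moreover have "0 \<le> ext y b" using ext_nonneg[OF y b(1)] by simp
    moreover have lQ: "last ps \<in> P - A" using H U2Q last_in_set by blast
    have "y (last ps) \<le> y q" using Y(4) lQ H U1Q by auto
    ultimately show "sum_list (map (F y) ps) \<le> F y q" using FU1 H by simp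
  qed
  have c8: "\<forall>p\<in>P-A. F y p \<in> \<int> \<and> 0 \<le> F y p"
  proof
    fix p assume p: "p \<in> P - A"
    show "F y p \<in> \<int> \<and> 0 \<le> F y p"
    proof (cases "p \<in> U2")
      case True
      have "Max (ext y ` pred p) \<in> ext y ` pred p" using fin_pred pred_ne2[OF p] by (intro Max_in) auto
      then have "Max (ext y ` pred p) \<in> \<int>" using ext_nonneg[OF y] unfolding pred_def by auto
      then show ?thesis using True c5 Y(5) p unfolding F_def by auto
    next
      case False then show ?thesis using Y(5) p F_U1 by auto
    qed
  qed
  show ?thesis unfolding CP_iff using c1 c2 c3 c4 c5 c6 c7 c8 by blast
qed

lemma F_inj: "inj_on F OP"
proof
  fix y y' assume y: "y \<in> OP" and y': "y' \<in> OP" and eq: "F y = F y'"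
  have "\<forall>p. p \<in> P \<longrightarrow> ext y p = ext y' p"
  proof
    fix p show "p \<in> P \<longrightarrow> ext y p = ext y' p"
    proof (induction p rule: wf_induct[OF wfR])
      case (1 p)
      show ?case
      proof
        assume pP: "p \<in> P"
        show "ext y p = ext y' p"
        proof (cases "p \<in> U2")
          case True
          have "ext y ` pred p = ext y' ` pred p"
            using 1 pP unfolding pred_def R_def by (intro image_cong) auto
          then show ?thesis using True fun_cong[OF eq, of p] cover unfolding F_def ext_def by auto
        next
          case False then show ?thesis using fun_cong[OF eq, of p] F_U1 unfolding ext_def by auto
        qed
      qed
    qed
  qed
  note H = this
  show "y = y'"
  proof
    fix p show "y p = y' p"
    proof (cases "p \<in> P - A")
      case True then show ?thesis using H unfolding ext_def by force
    next
      case False then show ?thesis using y y' unfolding OP_iff by simp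
    qed
  qed
qed


definition "H x = (\<lambda>g p. if p \<in> U2 then x p + Max ((\<lambda>q. if q \<in> U2 then g q else mval U1 lam x q) ` pred p) else 0)"
definition "gv x = wfrec R (H x)"
definition "val x q = (if q \<in> U2 then gv x q else mval U1 lam x q)"
definition "G x p = (if p \<in> U2 then gv x p else x p)"

lemma gv_eq: assumes p: "p \<in> U2" shows "gv x p = x p + Max (val x ` pred p)"
proof -
  have pP: "p \<in> P" using p cover by blast
  have "gv x p = H x (cut (gv x) R p) p" unfolding gv_def by (rule wfrec[OF wfR])
  also have "\<dots> = x p + Max ((\<lambda>q. if q \<in> U2 then cut (gv x) R p q else mval U1 lam x q) ` pred p)"
    using p unfolding H_def by simp
  also have "(\<lambda>q. if q \<in> U2 then cut (gv x) R p q else mval U1 lam x q) ` pred p = val x ` pred p"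
    using pP unfolding val_def by (intro image_cong) (auto simp: cut_apply R_def pred_def)
  finally show ?thesis .
qed

lemma val_in: assumes "q \<in> pred p" "p \<in> U2" shows "val x q \<le> Max (val x ` pred p)"
  using assms fin_pred by (intro Max_ge) auto

lemma gv_props: assumes x: "x \<in> CP"
  shows "p \<in> U2 \<longrightarrow> gv x p \<in> \<int> \<and> 0 \<le> gv x p \<and> (\<exists>ps b. ps \<noteq> [] \<and> set ps \<subseteq> U2 \<and> sorted_wrt rel ps
     \<and> last ps = p \<and> (\<forall>z\<in>set ps. z = p \<or> rel z p) \<and> b \<in> A \<union> U1 \<and> rel b (hd ps)
     \<and> gv x p = mval U1 lam x b + sum_list (map x ps))"
proof (induction p rule: wf_induct[OF wfR])
  case (1 p)
  show ?case
  proof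
    assume pU: "p \<in> U2"
    have pQ: "p \<in> P - A" using pU cover by blast
    have xlat: "\<forall>p\<in>P-A. x p \<in> \<int> \<and> 0 \<le> x p" using x unfolding CP_iff by blast
    have "Max (val x ` pred p) \<in> val x ` pred p" using fin_pred pred_ne2[OF pQ] by (intro Max_in) auto
    then obtain q where q: "q \<in> pred p" and mq: "Max (val x ` pred p) = val x q" by auto
    have qP: "q \<in> P" and rqp: "rel q p" using q unfolding pred_def by auto
    have eq: "gv x p = x p + val x q" using gv_eq[OF pU] mq by simp
    show "gv x p \<in> \<int> \<and> 0 \<le> gv x p \<and> (\<exists>ps b. ps \<noteq> [] \<and> set ps \<subseteq> U2 \<and> sorted_wrt rel ps
     \<and> last ps = p \<and> (\<forall>z\<in>set ps. z = p \<or> rel z p) \<and> b \<in> A \<union> U1 \<and> rel b (hd ps)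
     \<and> gv x p = mval U1 lam x b + sum_list (map x ps))"
    proof (cases "q \<in> U2")
      case True
      have qR: "(q, p) \<in> R" using qP pQ rqp unfolding R_def by auto
      note IH0 = 1[rule_format, OF qR True]
      from IH0 obtain ps b where IH: "gv x q \<in> \<int>" "0 \<le> gv x q" "ps \<noteq> []" "set ps \<subseteq> U2" "sorted_wrt rel ps"
        "last ps = q" "\<forall>z\<in>set ps. z = q \<or> rel z q" "b \<in> A \<union> U1" "rel b (hd ps)"
        "gv x q = mval U1 lam x b + sum_list (map x ps)" by (elim conjE exE) blast
      have U2P: "U2 \<subseteq> P" using cover by blast
      have allp: "\<forall>z\<in>set ps. rel z p"
      proof
        fix z assume z: "z \<in> set ps"
        then have "z \<in> P" using IH(4) U2P by blast
        then show "rel z p" using IH(7) z rqp tr[of z q p] qP pQ by auto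
      qed
      have vq: "val x q = gv x q" using True unfolding val_def by simp
      show ?thesis
      proof (intro conjI)
        show "gv x p \<in> \<int>" using eq vq IH(1) xlat pQ by auto
        show "0 \<le> gv x p" using eq vq IH(2) xlat pQ by auto
        show "\<exists>ps b. ps \<noteq> [] \<and> set ps \<subseteq> U2 \<and> sorted_wrt rel ps
         \<and> last ps = p \<and> (\<forall>z\<in>set ps. z = p \<or> rel z p) \<and> b \<in> A \<union> U1 \<and> rel b (hd ps)
         \<and> gv x p = mval U1 lam x b + sum_list (map x ps)"
        proof (rule exI[of _ "ps @ [p]"], rule exI[of _ b], intro conjI)
          show "ps @ [p] \<noteq> []" by simp
          show "set (ps @ [p]) \<subseteq> U2" using IH(4) pU by simp
          show "sorted_wrt rel (ps @ [p])" using IH(5) allp by (simp add: sorted_wrt_append)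
          show "last (ps @ [p]) = p" by simp
          show "\<forall>z\<in>set (ps @ [p]). z = p \<or> rel z p" using allp by simp
          show "b \<in> A \<union> U1" by (rule IH(8))
          show "rel b (hd (ps @ [p]))" using IH(9) IH(3) by simp
          show "gv x p = mval U1 lam x b + sum_list (map x (ps @ [p]))" using eq vq IH(10) by simp
        qed
      qed
    next
      case False
      have qA: "q \<in> A \<union> U1" using False qP cover by blast
      have vq: "val x q = mval U1 lam x q" using False unfolding val_def by simp
      have mz: "mval U1 lam x q \<in> \<int> \<and> 0 \<le> mval U1 lam x q"
        using qA xlat cover unfolding mval_def by auto
      show ?thesis
      proof (intro conjI)
        show "gv x p \<in> \<int>" using eq vq mz xlat pQ by auto
        show "0 \<le> gv x p" using eq vq mz xlat pQ by auto
        show "\<exists>ps b. ps \<noteq> [] \<and> set ps \<subseteq> U2 \<and> sorted_wrt rel ps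
         \<and> last ps = p \<and> (\<forall>z\<in>set ps. z = p \<or> rel z p) \<and> b \<in> A \<union> U1 \<and> rel b (hd ps)
         \<and> gv x p = mval U1 lam x b + sum_list (map x ps)"
          apply (rule exI[of _ "[p]"], rule exI[of _ q])
          using qA rqp pU eq vq by auto
      qed
    qed
  qed
qed


lemma G_in: assumes x: "x \<in> CP" shows "G x \<in> OP"
proof -
  note XX = x[unfolded CP_iff]
  note X = conjunct1[OF XX] conjunct1[OF conjunct2[OF XX]]
    conjunct1[OF conjunct2[OF conjunct2[OF XX]]]
    conjunct1[OF conjunct2[OF conjunct2[OF conjunct2[OF XX]]]]
    conjunct1[OF conjunct2[OF conjunct2[OF conjunct2[OF conjunct2[OF XX]]]]]
    conjunct1[OF conjunct2[OF conjunct2[OF conjunct2[OF conjunct2[OF conjunct2[OF XX]]]]]]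
    conjunct1[OF conjunct2[OF conjunct2[OF conjunct2[OF conjunct2[OF conjunct2[OF conjunct2[OF XX]]]]]]]
    conjunct2[OF conjunct2[OF conjunct2[OF conjunct2[OF conjunct2[OF conjunct2[OF conjunct2[OF XX]]]]]]]
  have U1Q: "U1 \<subseteq> P - A" and U2Q: "U2 \<subseteq> P - A" using cover by auto
  have GU1: "\<And>p. p \<notin> U2 \<Longrightarrow> G x p = x p" unfolding G_def by simp
  have GU2: "\<And>p. p \<in> U2 \<Longrightarrow> G x p = gv x p" unfolding G_def by simp
  have chain: "\<And>p a. p \<in> U2 \<Longrightarrow> a \<in> A \<union> U1 \<Longrightarrow> rel p a \<Longrightarrow> gv x p \<le> mval U1 lam x a"
  proof -
    fix p a assume p: "p \<in> U2" and a: "a \<in> A \<union> U1" and pa: "rel p a"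
    have "\<exists>ps b. ps \<noteq> [] \<and> set ps \<subseteq> U2 \<and> sorted_wrt rel ps
     \<and> last ps = p \<and> (\<forall>z\<in>set ps. z = p \<or> rel z p) \<and> b \<in> A \<union> U1 \<and> rel b (hd ps)
     \<and> gv x p = mval U1 lam x b + sum_list (map x ps)" using gv_props[OF x] p by blast
    then obtain ps b where C: "ps \<noteq> []" "set ps \<subseteq> U2" "sorted_wrt rel ps" "last ps = p"
      "b \<in> A \<union> U1" "rel b (hd ps)" "gv x p = mval U1 lam x b + sum_list (map x ps)" by blast
    have "sum_list (map x ps) \<le> mval U1 lam x a - mval U1 lam x b"
      using X(6) C a pa by blast
    then show "gv x p \<le> mval U1 lam x a" using C(7) by simp
  qed
  have o1: "\<forall>p. p \<notin> P - A \<longrightarrow> G x p = 0"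
  proof (intro allI impI)
    fix p assume p: "p \<notin> P - A"
    then have "p \<notin> U2" using U2Q by blast
    then show "G x p = 0" using GU1 X(1) p by simp
  qed
  have o2: "\<forall>p\<in>P-A. \<forall>a\<in>A. rel p a \<longrightarrow> G x p \<le> real (lam a)"
  proof (intro ballI impI)
    fix p a assume p: "p \<in> P - A" and a: "a \<in> A" and pa: "rel p a"
    show "G x p \<le> real (lam a)"
    proof (cases "p \<in> U2")
      case True
      have "a \<notin> U1" using a U1Q by blast
      then have "mval U1 lam x a = real (lam a)" unfolding mval_def by simp
      then show ?thesis using chain[OF True _ pa] a GU2[OF True] by simp
    next
      case False
      then have "p \<in> U1" using p cover by blast
      then show ?thesis using X(2) a pa GU1[OF False] by simp
    qed
  qed
  have o3: "\<forall>q\<in>P-A. \<forall>b\<in>A. rel b q \<longrightarrow> real (lam b) \<le> G x q"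
  proof (intro ballI impI)
    fix q b assume q: "q \<in> P - A" and b: "b \<in> A" and bq: "rel b q"
    show "real (lam b) \<le> G x q"
    proof (cases "q \<in> U2")
      case True
      have bpred: "b \<in> pred q" using b bq AP unfolding pred_def by blast
      have "b \<notin> U1" "b \<notin> U2" using b U1Q U2Q by blast+
      then have "val x b = real (lam b)" unfolding val_def mval_def by simp
      then have "real (lam b) \<le> Max (val x ` pred q)" using val_in[OF bpred True, where x=x] by simp
      moreover have "0 \<le> x q" using X(5) True by blast
      ultimately show ?thesis using gv_eq[OF True] GU2[OF True] by simp
    next
      case False
      then have "q \<in> U1" using q cover by blast
      then show ?thesis using X(3) b bq GU1[OF False] by simp
    qed
  qed
  have o4: "\<forall>p\<in>P-A. \<forall>q\<in>P-A. rel p q \<longrightarrow> G x p \<le> G x q"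
  proof (intro ballI impI)
    fix p q assume p: "p \<in> P - A" and q: "q \<in> P - A" and pq: "rel p q"
    show "G x p \<le> G x q"
    proof (cases "p \<in> U2")
      case pT: True
      show ?thesis
      proof (cases "q \<in> U2")
        case True
        have ppred: "p \<in> pred q" using p pq unfolding pred_def by blast
        have "val x p = gv x p" using pT unfolding val_def by simp
        then have "gv x p \<le> Max (val x ` pred q)" using val_in[OF ppred True, where x=x] by simp
        moreover have "0 \<le> x q" using X(5) True by blast
        ultimately show ?thesis using gv_eq[OF True] GU2[OF True] GU2[OF pT] by simp
      next
        case False
        then have qU: "q \<in> U1" using q cover by blast
        then have "mval U1 lam x q = x q" unfolding mval_def by simp
        then show ?thesis using chain[OF pT _ pq] qU GU2[OF pT] GU1[OF False] by simp
      qed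
    next
      case pF: False
      then have pU: "p \<in> U1" using p cover by blast
      show ?thesis
      proof (cases "q \<in> U2")
        case True then show ?thesis using noadm[OF pU True] pq by simp
      next
        case False
        then have "q \<in> U1" using q cover by blast
        then show ?thesis using X(4) pU pq GU1[OF False] GU1[OF pF] by simp
      qed
    qed
  qed
  have o5: "\<forall>p\<in>P-A. G x p \<in> \<int> \<and> 0 \<le> G x p"
  proof
    fix p assume p: "p \<in> P - A"
    show "G x p \<in> \<int> \<and> 0 \<le> G x p"
    proof (cases "p \<in> U2")
      case True then show ?thesis using gv_props[OF x, of p] True GU2[OF True] by simp
    next
      case False then show ?thesis using X(8) p GU1[OF False] by simp
    qed
  qed
  show ?thesis unfolding OP_iff using o1 o2 o3 o4 o5 by blast
qed

lemma FG: assumes x: "x \<in> CP" shows "F (G x) = x"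
proof
  fix p
  have X1: "\<forall>p. p \<notin> P - A \<longrightarrow> x p = 0" using conjunct1[OF x[unfolded CP_iff]] .
  show "F (G x) p = x p"
  proof (cases "p \<in> U2")
    case True
    have "ext (G x) ` pred p = val x ` pred p"
    proof (rule image_cong[OF refl])
      fix q assume "q \<in> pred p"
      then have qP: "q \<in> P" unfolding pred_def by simp
      show "ext (G x) q = val x q"
      proof (cases "q \<in> A")
        case True
        then have "q \<notin> U1" "q \<notin> U2" using cover by blast+
        then show ?thesis using True unfolding ext_def val_def mval_def by simp
      next
        case False
        then show ?thesis unfolding ext_def val_def mval_def G_def using qP cover by auto
      qed
    qed
    then show ?thesis using True gv_eq[OF True] unfolding F_def G_def by simp
  next
    case False then show ?thesis unfolding F_def G_def by simp
  qed
qed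

lemma card_eq: "card CP = card OP"
proof -
  have "bij_betw F OP CP"
    unfolding bij_betw_def
  proof
    show "inj_on F OP" by (rule F_inj)
    show "F ` OP = CP"
    proof
      show "F ` OP \<subseteq> CP" using F_in by blast
      show "CP \<subseteq> F ` OP"
      proof
        fix x assume x: "x \<in> CP"
        then have "x = F (G x)" using FG by simp
        then show "x \<in> F ` OP" using G_in[OF x] by blast
      qed
    qed
  qed
  then show ?thesis by (simp add: bij_betw_same_card)
qed

end

theorem theorem3p1:
  fixes P A U1 U2 :: "'a set" and rel :: "'a \<Rightarrow> 'a \<Rightarrow> bool" and lam :: "'a \<Rightarrow> nat"
  assumes "marked_poset P rel A"
    and "admissible_decomp P rel A U1 U2"
  shows "\<forall>n::nat. card (lattice_points_CO P rel A (\<lambda>a. n * lam a) U1 U2)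
           = card (lattice_points_CO P rel A (\<lambda>a. n * lam a) (P - A) {})"
proof
  fix n :: nat
  interpret mcp P A U1 U2 rel "\<lambda>a. n * lam a" by unfold_locales (rule assms)+
  show "card (lattice_points_CO P rel A (\<lambda>a. n * lam a) U1 U2)
           = card (lattice_points_CO P rel A (\<lambda>a. n * lam a) (P - A) {})" by (rule card_eq)
qed

end
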